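(* Fix $\alpha>0$. For each $N\ge 2$, let $T_1,\ldots,T_N$ be drawn independently and uniformly at random (i.e. with replacement) from $\{n\in\mathbb{N}: n\le e^{\alpha N}\}$, and let $\Gamma_{j,k}=\gcd(T_j,T_k)$. Then for every $\eta>0$, \[ \lim_{N\to\infty}\mathbb{P}\Big[N^{2-\eta}<\max_{1\le j<k\le N}\Gamma_{j,k}<N^{2+\eta}\Big]=1 . \] *)

theory Defs
  imports "HOL-Probability.Probability"
begin

definition sample_set :: "real \<Rightarrow> nat \<Rightarrow> nat set" where
  "sample_set \<alpha> N = {n::nat. 1 \<le> n \<and> real n \<le> exp (\<alpha> * real N)}"

text \<open>Joint law of T_0,...,T_{N-1}: i.i.d. uniform on sample_set (indices shifted to start at 0).\<close>
definition T_law :: "real \<Rightarrow> nat \<Rightarrow> (nat \<Rightarrow> nat) pmf" where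
  "T_law \<alpha> N = Pi_pmf {..<N} 0 (\<lambda>_. pmf_of_set (sample_set \<alpha> N))"

definition max_gcd :: "nat \<Rightarrow> (nat \<Rightarrow> nat) \<Rightarrow> nat" where
  "max_gcd N T = Max {gcd (T j) (T k) | j k. j < k \<and> k < N}"

end

theory Submission
  imports Defs
begin


definition cnt :: "nat \<Rightarrow> (nat \<Rightarrow> bool) \<Rightarrow> real" where
  "cnt n Q = real (card {t\<in>{1..n}. Q t}) / real n"

lemma real_le_iff_nat_floor: assumes "0 \<le> x" shows "real n \<le> x \<longleftrightarrow> n \<le> nat \<lfloor>x\<rfloor>"
proof
  assume "real n \<le> x" then have "int n \<le> \<lfloor>x\<rfloor>" by (simp add: le_floor_iff)
  then show "n \<le> nat \<lfloor>x\<rfloor>" by linarith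
next
  assume "n \<le> nat \<lfloor>x\<rfloor>" then have "real n \<le> real (nat \<lfloor>x\<rfloor>)" by simp
  also have "\<dots> \<le> x" using of_nat_floor[OF assms] .
  finally show "real n \<le> x" .
qed

lemma sample_set_eq: "sample_set \<alpha> N = {1..nat \<lfloor>exp (\<alpha> * real N)\<rfloor>}"
proof (rule set_eqI)
  fix n
  have e: "real n \<le> exp (\<alpha> * real N) \<longleftrightarrow> n \<le> nat \<lfloor>exp (\<alpha> * real N)\<rfloor>"
    by (rule real_le_iff_nat_floor) simp
  show "n \<in> sample_set \<alpha> N \<longleftrightarrow> n \<in> {1..nat \<lfloor>exp (\<alpha> * real N)\<rfloor>}"
    unfolding sample_set_def mem_Collect_eq atLeastAtMost_iff e by (rule refl)
qed

lemma EU: assumes "n \<ge> 1"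
  shows "measure_pmf.expectation (pmf_of_set {1..n}) (\<lambda>t. of_bool (Q t)) = cnt n Q"
proof -
  have "{1..n} \<inter> Collect Q = {t\<in>{1..n}. Q t}" by auto
  thus ?thesis using assms by (simp add: integral_pmf_of_set cnt_def)
qed

lemma cnt_nonneg: "cnt n Q \<ge> 0" by (simp add: cnt_def)
lemma cnt_le1: "cnt n Q \<le> 1"
proof -
  have "card {t\<in>{1..n}. Q t} \<le> card {1..n}" by (rule card_mono) auto
  hence c: "real (card {t\<in>{1..n}. Q t}) \<le> real n" by simp
  show ?thesis unfolding cnt_def
  proof (cases "n = 0")
    case False
    hence "real n > 0" by simp
    thus "real (card {t\<in>{1..n}. Q t}) / real n \<le> 1" using c by (subst divide_le_eq_1) blast
  qed simp
qed
lemma cnt_mono: assumes "\<And>t. Q t \<Longrightarrow> R t" shows "cnt n Q \<le> cnt n R"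
proof -
  have "card {t\<in>{1..n}. Q t} \<le> card {t\<in>{1..n}. R t}" by (rule card_mono) (use assms in auto)
  hence "real (card {t\<in>{1..n}. Q t}) \<le> real (card {t\<in>{1..n}. R t})" by (rule of_nat_mono)
  thus ?thesis unfolding cnt_def by (rule divide_right_mono) simp
qed

lemma card_mult_set: assumes "m > 0"
  shows "card {t\<in>{1..n}. m dvd t} = n div m"
proof -
  have "{t\<in>{1..n}. m dvd t} = (\<lambda>i. m * i) ` {1..n div m}"
  proof safe
    fix t assume t: "t \<in> {1..n}" "m dvd t"
    then obtain i where i: "t = m * i" by auto
    have "i \<ge> 1" using t i by (cases i) auto
    moreover have "i * m \<le> n" using t i by (simp add: mult.commute)
    hence "i \<le> n div m" using assms by (simp add: less_eq_div_iff_mult_less_eq)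
    ultimately show "t \<in> (\<lambda>i. m * i) ` {1..n div m}" using i by auto
  next
    fix i assume "i \<in> {1..n div m}"
    hence i: "1 \<le> i" "i * m \<le> n" using assms by (auto simp: less_eq_div_iff_mult_less_eq)
    have "1 \<le> m * i" using i assms by simp
    thus "m * i \<in> {1..n}" using i by (simp add: mult.commute)
  qed auto
  also have "card \<dots> = n div m" using assms by (subst card_image) (auto simp: inj_on_def)
  finally show ?thesis .
qed

lemma cnt_dvd: "m > 0 \<Longrightarrow> cnt n (\<lambda>t. m dvd t) = real (n div m) / real n"
  unfolding cnt_def by (subst card_mult_set) auto

lemma cnt_dvd_le: assumes "m > 0" shows "cnt n (\<lambda>t. m dvd t) \<le> 1 / real m"
proof (cases "n = 0")
  case False
  have "real (n div m) * real m \<le> real n"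
    by (metis of_nat_le_iff of_nat_mult div_times_less_eq_dividend)
  thus ?thesis using assms False by (simp add: cnt_dvd field_simps)
qed (simp add: cnt_def)

lemma cnt_dvd_ge: assumes "m > 0" "2 * m \<le> n" shows "cnt n (\<lambda>t. m dvd t) \<ge> 1 / (2 * real m)"
proof -
  have "n < (n div m + 1) * m"
    proof -
    have e: "(n div m + 1) * m = m * (n div m) + m" by (simp add: algebra_simps)
    show ?thesis unfolding e using mod_less_divisor[OF assms(1), of n] mult_div_mod_eq[of m n] by linarith
  qed
  hence "real n < real ((n div m + 1) * m)" by (simp only: of_nat_less_iff)
  hence "real n < (real (n div m) + 1) * real m" by (simp add: algebra_simps)
  hence "real n / real m - 1 \<le> real (n div m)" using assms by (simp add: field_simps)
  moreover have "real n / real m \<ge> 2" using assms by (simp add: field_simps)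
  ultimately have "real (n div m) \<ge> real n / (2 * real m)" by (simp add: field_simps)
  thus ?thesis using assms by (simp add: cnt_dvd field_simps)
qed



definition Om :: "nat \<Rightarrow> nat \<Rightarrow> (nat \<Rightarrow> nat) pmf" where
  "Om n N = Pi_pmf {..<N} 0 (\<lambda>_. pmf_of_set {1..n})"

lemma set_Om: "n \<ge> 1 \<Longrightarrow> set_pmf (Om n N) = PiE_dflt {..<N} 0 (\<lambda>_. {1..n})"
  unfolding Om_def by (subst set_Pi_pmf) (auto simp: o_def)

lemma finite_Om: "n \<ge> 1 \<Longrightarrow> finite (set_pmf (Om n N))"
  by (subst set_Om) auto

lemma integrable_Om: fixes f :: "_ \<Rightarrow> real" shows "n \<ge> 1 \<Longrightarrow> integrable (measure_pmf (Om n N)) f"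
  by (rule integrable_measure_pmf_finite) (rule finite_Om)

lemma E_prod_eq: assumes "n \<ge> 1"
  shows "measure_pmf.expectation (Om n N) (\<lambda>T. \<Prod>x<N. (of_bool (C x (T x)) :: real))
     = (\<Prod>x<N. cnt n (C x))"
proof -
  have "measure_pmf.expectation (Om n N) (\<lambda>T. \<Prod>x<N. (of_bool (C x (T x)) :: real))
     = (\<Prod>x<N. measure_pmf.expectation (pmf_of_set {1..n}) (\<lambda>t. (of_bool (C x t) :: real)))"
    unfolding Om_def
    by (rule expectation_prod_Pi_pmf[where f = "\<lambda>x t. of_bool (C x t)"]) (use assms in \<open>auto intro!: integrable_measure_pmf_finite\<close>)
  also have "\<dots> = (\<Prod>x<N. cnt n (C x))" using EU[OF assms] by simp
  finally show ?thesis .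
qed

lemma E_prod_le: assumes "n \<ge> 1" "G \<subseteq> {..<N}"
  shows "measure_pmf.expectation (Om n N) (\<lambda>T. \<Prod>x<N. (of_bool (C x (T x)) :: real))
     \<le> (\<Prod>x\<in>G. cnt n (C x))"
proof -
  have "(\<Prod>x<N. cnt n (C x)) = (\<Prod>x\<in>{..<N} - G. cnt n (C x)) * (\<Prod>x\<in>G. cnt n (C x))"
    by (rule prod.subset_diff) (use assms in auto)
  also have "\<dots> \<le> 1 * (\<Prod>x\<in>G. cnt n (C x))"
    by (intro mult_right_mono prod_le_1 prod_nonneg) (auto simp: cnt_nonneg cnt_le1)
  finally show ?thesis using E_prod_eq[OF assms(1)] by simp
qed

lemma E_prod_eq': assumes "n \<ge> 1" "G \<subseteq> {..<N}" "\<And>x t. x \<in> {..<N} - G \<Longrightarrow> C x t"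
  shows "measure_pmf.expectation (Om n N) (\<lambda>T. \<Prod>x<N. (of_bool (C x (T x)) :: real))
     = (\<Prod>x\<in>G. cnt n (C x))"
proof -
  have "(\<Prod>x<N. cnt n (C x)) = (\<Prod>x\<in>{..<N} - G. cnt n (C x)) * (\<Prod>x\<in>G. cnt n (C x))"
    by (rule prod.subset_diff) (use assms in auto)
  also have "(\<Prod>x\<in>{..<N} - G. cnt n (C x)) = 1"
  proof (rule prod.neutral, rule ballI)
    fix x assume x: "x \<in> {..<N} - G"
    have "{t \<in> {1..n}. C x t} = {1..n}" using assms(3)[OF x] by auto
    thus "cnt n (C x) = 1" using assms(1) by (simp add: cnt_def)
  qed
  finally show ?thesis using E_prod_eq[OF assms(1)] by simp
qed



definition pairs :: "nat \<Rightarrow> (nat \<times> nat) set" where "pairs N = {(j,k). j < k \<and> k < N}"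
definition Zc :: "nat \<times> nat \<Rightarrow> nat \<Rightarrow> nat \<Rightarrow> nat \<Rightarrow> bool" where
  "Zc p d x t = ((x = fst p \<or> x = snd p) \<longrightarrow> d dvd t)"
definition Z :: "nat \<Rightarrow> nat \<times> nat \<Rightarrow> nat \<Rightarrow> (nat \<Rightarrow> nat) \<Rightarrow> real" where
  "Z N p d T = (\<Prod>x<N. of_bool (Zc p d x (T x)))"
definition nd :: "nat \<times> nat \<Rightarrow> nat \<times> nat \<Rightarrow> bool" where
  "nd p p' = (fst p = fst p' \<or> fst p = snd p' \<or> snd p = fst p' \<or> snd p = snd p')"

lemma Z_mult: "Z N p d T * Z N p' d' T = (\<Prod>x<N. of_bool (Zc p d x (T x) \<and> Zc p' d' x (T x)))"
  unfolding Z_def prod.distrib[symmetric] of_bool_conj ..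

lemma cnt_both: assumes "x = fst p \<or> x = snd p" "x = fst p' \<or> x = snd p'" "d > 0" "d' > 0"
  shows "cnt n (\<lambda>t. Zc p d x t \<and> Zc p' d' x t) \<le> 1 / real (lcm d d')"
proof -
  have "cnt n (\<lambda>t. Zc p d x t \<and> Zc p' d' x t) \<le> cnt n (\<lambda>t. lcm d d' dvd t)"
    by (rule cnt_mono) (use assms in \<open>auto simp: Zc_def\<close>)
  also have "\<dots> \<le> 1 / real (lcm d d')" by (rule cnt_dvd_le) (use assms in \<open>simp add: lcm_pos_nat\<close>)
  finally show ?thesis .
qed

lemma cnt_left: assumes "x = fst p \<or> x = snd p" "d > 0"
  shows "cnt n (\<lambda>t. Zc p d x t \<and> Zc p' d' x t) \<le> 1 / real d"
proof -
  have "cnt n (\<lambda>t. Zc p d x t \<and> Zc p' d' x t) \<le> cnt n (\<lambda>t. d dvd t)"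
    by (rule cnt_mono) (use assms in \<open>auto simp: Zc_def\<close>)
  also have "\<dots> \<le> 1 / real d" by (rule cnt_dvd_le) (use assms in simp)
  finally show ?thesis .
qed

lemma cnt_right: assumes "x = fst p' \<or> x = snd p'" "d' > 0"
  shows "cnt n (\<lambda>t. Zc p d x t \<and> Zc p' d' x t) \<le> 1 / real d'"
proof -
  have "cnt n (\<lambda>t. Zc p d x t \<and> Zc p' d' x t) \<le> cnt n (\<lambda>t. d' dvd t)"
    by (rule cnt_mono) (use assms in \<open>auto simp: Zc_def\<close>)
  also have "\<dots> \<le> 1 / real d'" by (rule cnt_dvd_le) (use assms in simp)
  finally show ?thesis .
qed

lemma inv_lcm: assumes "d > 0" "d' > 0"
  shows "1 / real (lcm d d') = real (gcd d d') / (real d * real d')"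
proof -
  have "real d * real d' = real (gcd d d') * real (lcm d d')"
    by (metis of_nat_mult prod_gcd_lcm_nat)
  moreover have "real (lcm d d') > 0" "real (gcd d d') > 0" using assms by (auto simp: lcm_pos_nat)
  ultimately show ?thesis by (simp add: field_simps)
qed

lemma EZ: assumes "n \<ge> 1" "p \<in> pairs N"
  shows "measure_pmf.expectation (Om n N) (Z N p d) = cnt n (\<lambda>t. d dvd t) ^ 2"
proof -
  obtain j k where p: "p = (j,k)" "j < k" "k < N" using assms(2) by (auto simp: pairs_def)
  have "measure_pmf.expectation (Om n N) (Z N p d) = (\<Prod>x\<in>{j,k}. cnt n (Zc p d x))"
    unfolding Z_def by (rule E_prod_eq'[OF assms(1)]) (use p in \<open>auto simp: Zc_def\<close>)
  also have "Zc p d j = (\<lambda>t. d dvd t)" "Zc p d k = (\<lambda>t. d dvd t)"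
    using p by (auto simp: Zc_def fun_eq_iff)
  hence "(\<Prod>x\<in>{j,k}. cnt n (Zc p d x)) = cnt n (\<lambda>t. d dvd t) ^ 2"
    using p by (simp add: power2_eq_square)
  finally show ?thesis .
qed

lemma EZZ_disj: assumes "n \<ge> 1" "p \<in> pairs N" "p' \<in> pairs N" "\<not> nd p p'"
  shows "measure_pmf.expectation (Om n N) (\<lambda>T. Z N p d T * Z N p' d' T)
     \<le> cnt n (\<lambda>t. d dvd t) ^ 2 * cnt n (\<lambda>t. d' dvd t) ^ 2"
proof -
  obtain j k where p: "p = (j,k)" "j < k" "k < N" using assms(2) by (auto simp: pairs_def)
  obtain j' k' where p': "p' = (j',k')" "j' < k'" "k' < N" using assms(3) by (auto simp: pairs_def)
  have dd: "j \<noteq> j'" "j \<noteq> k'" "k \<noteq> j'" "k \<noteq> k'" using assms(4) p p' by (auto simp: nd_def)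
  have "measure_pmf.expectation (Om n N) (\<lambda>T. Z N p d T * Z N p' d' T)
     \<le> (\<Prod>x\<in>{j,k,j',k'}. cnt n (\<lambda>t. Zc p d x t \<and> Zc p' d' x t))"
    unfolding Z_mult by (rule E_prod_le[OF assms(1)]) (use p p' in auto)
  also have "\<dots> = cnt n (\<lambda>t. d dvd t) ^ 2 * cnt n (\<lambda>t. d' dvd t) ^ 2"
    using p p' dd by (simp add: Zc_def power2_eq_square)
  finally show ?thesis .
qed

lemma EZZ_same: assumes "n \<ge> 1" "p \<in> pairs N" "d > 0" "d' > 0"
  shows "measure_pmf.expectation (Om n N) (\<lambda>T. Z N p d T * Z N p d' T)
     \<le> real (gcd d d') ^ 2 / (real d * real d') ^ 2"
proof -
  obtain j k where p: "p = (j,k)" "j < k" "k < N" using assms(2) by (auto simp: pairs_def)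
  have "measure_pmf.expectation (Om n N) (\<lambda>T. Z N p d T * Z N p d' T)
     \<le> (\<Prod>x\<in>{j,k}. cnt n (\<lambda>t. Zc p d x t \<and> Zc p d' x t))"
    unfolding Z_mult by (rule E_prod_le[OF assms(1)]) (use p in auto)
  also have "\<dots> = cnt n (\<lambda>t. Zc p d j t \<and> Zc p d' j t) * cnt n (\<lambda>t. Zc p d k t \<and> Zc p d' k t)"
    using p by simp
  also have "\<dots> \<le> (1 / real (lcm d d')) * (1 / real (lcm d d'))"
    by (intro mult_mono cnt_both cnt_nonneg) (use p assms in auto)
  also have "\<dots> = real (gcd d d') ^ 2 / (real d * real d') ^ 2"
    using inv_lcm[OF assms(3,4)] by (simp add: power2_eq_square)
  finally show ?thesis .
qed

lemma EZZ_one: assumes "n \<ge> 1" "x < N" "y < N" "z < N" "x \<noteq> y" "x \<noteq> z" "y \<noteq> z"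
  "x = fst p \<or> x = snd p" "x = fst p' \<or> x = snd p'" "y = fst p \<or> y = snd p" "z = fst p' \<or> z = snd p'"
  "d > 0" "d' > 0"
  shows "measure_pmf.expectation (Om n N) (\<lambda>T. Z N p d T * Z N p' d' T)
     \<le> real (gcd d d') / (real d * real d') ^ 2"
proof -
  have "measure_pmf.expectation (Om n N) (\<lambda>T. Z N p d T * Z N p' d' T)
     \<le> (\<Prod>x\<in>{x,y,z}. cnt n (\<lambda>t. Zc p d x t \<and> Zc p' d' x t))"
    unfolding Z_mult by (rule E_prod_le[OF assms(1)]) (use assms in auto)
  also have "\<dots> = cnt n (\<lambda>t. Zc p d x t \<and> Zc p' d' x t) * (cnt n (\<lambda>t. Zc p d y t \<and> Zc p' d' y t)
      * cnt n (\<lambda>t. Zc p d z t \<and> Zc p' d' z t))"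
    using assms by simp
  also have "\<dots> \<le> (1 / real (lcm d d')) * ((1 / real d) * (1 / real d'))"
    by (intro mult_mono cnt_both cnt_left cnt_right cnt_nonneg mult_nonneg_nonneg) (use assms in auto)
  also have "\<dots> = real (gcd d d') / (real d * real d') ^ 2"
    using inv_lcm[OF assms(12,13)] by (simp add: power2_eq_square)
  finally show ?thesis .
qed



lemma EZZ: assumes "n \<ge> 1" "p \<in> pairs N" "p' \<in> pairs N" "d > 0" "d' > 0"
  shows "measure_pmf.expectation (Om n N) (\<lambda>T. Z N p d T * Z N p' d' T)
     \<le> cnt n (\<lambda>t. d dvd t) ^ 2 * cnt n (\<lambda>t. d' dvd t) ^ 2
       + of_bool (p = p') * (real (gcd d d') ^ 2 / (real d * real d') ^ 2)
       + of_bool (p \<noteq> p' \<and> nd p p') * (real (gcd d d') / (real d * real d') ^ 2)"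
  (is "?E \<le> ?a + ?b + ?c")
proof -
  have a: "?a \<ge> 0" by (simp add: cnt_nonneg)
  have b: "?b \<ge> 0" by simp
  have c: "?c \<ge> 0" by simp
  obtain j k where p: "p = (j,k)" "j < k" "k < N" using assms(2) by (auto simp: pairs_def)
  obtain j' k' where p': "p' = (j',k')" "j' < k'" "k' < N" using assms(3) by (auto simp: pairs_def)
  show ?thesis
  proof (cases "nd p p'")
    case False
    hence "?E \<le> ?a" by (intro EZZ_disj assms)
    thus ?thesis using b c by linarith
  next
    case True
    show ?thesis
    proof (cases "p = p'")
      case True
      hence "?E \<le> real (gcd d d') ^ 2 / (real d * real d') ^ 2"
        using EZZ_same[OF assms(1,2,4,5)] by simp
      moreover have "?b = real (gcd d d') ^ 2 / (real d * real d') ^ 2" using True by simp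
      ultimately show ?thesis using a c by linarith
    next
      case False
      have "?E \<le> real (gcd d d') / (real d * real d') ^ 2"
      proof -
        consider "j = j'" | "j = k'" | "k = j'" | "k = k'" using True p p' by (auto simp: nd_def)
        thus ?thesis
        proof cases
          case 1
          hence "k \<noteq> k'" using False p p' by auto
          thus ?thesis using 1 p p' assms by (intro EZZ_one[of n j N k k']) auto
        next
          case 2
          thus ?thesis using p p' assms by (intro EZZ_one[of n j N k j']) auto
        next
          case 3
          thus ?thesis using p p' assms by (intro EZZ_one[of n k N j k']) auto
        next
          case 4
          hence "j \<noteq> j'" using False p p' by auto
          thus ?thesis using 4 p p' assms by (intro EZZ_one[of n k N j j']) auto
        qed
      qed
      moreover have "?c = real (gcd d d') / (real d * real d') ^ 2" using True False by simp
      ultimately show ?thesis using a b by linarith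
    qed
  qed
qed

lemma sum_times: "(\<Sum>x\<in>A \<times> B. g x) = (\<Sum>a\<in>A. \<Sum>b\<in>B. g (a,b))"
  by (simp add: sum.cartesian_product)

lemma sum_sep: assumes "finite A" "finite D"
  shows "(\<Sum>q\<in>A \<times> D. \<Sum>q'\<in>A \<times> D. F (fst q) (fst q') * (H (snd q) (snd q') :: real))
       = (\<Sum>p\<in>A. \<Sum>p'\<in>A. F p p') * (\<Sum>d\<in>D. \<Sum>d'\<in>D. H d d')"
proof -
  have "(\<Sum>q\<in>A \<times> D. \<Sum>q'\<in>A \<times> D. F (fst q) (fst q') * H (snd q) (snd q'))
      = (\<Sum>p\<in>A. \<Sum>d\<in>D. \<Sum>p'\<in>A. \<Sum>d'\<in>D. F p p' * H d d')"
    by (simp only: sum_times fst_conv snd_conv)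
  also have "\<dots> = (\<Sum>p\<in>A. \<Sum>p'\<in>A. \<Sum>d\<in>D. \<Sum>d'\<in>D. F p p' * H d d')"
    by (rule sum.cong[OF refl], rule sum.swap)
  also have "\<dots> = (\<Sum>p\<in>A. \<Sum>p'\<in>A. F p p' * (\<Sum>d\<in>D. \<Sum>d'\<in>D. H d d'))"
    by (simp only: sum_distrib_left)
  also have "\<dots> = (\<Sum>p\<in>A. \<Sum>p'\<in>A. F p p') * (\<Sum>d\<in>D. \<Sum>d'\<in>D. H d d')"
    by (simp only: sum_distrib_right)
  finally show ?thesis .
qed



lemma prob_eq_E: "measure_pmf.prob M {x. P x} = measure_pmf.expectation M (\<lambda>x. of_bool (P x) :: real)"
proof -
  have "(\<lambda>x. of_bool (P x)::real) = indicator {x. P x}" by (auto simp: indicator_def fun_eq_iff)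
  thus ?thesis by (simp add: measure_pmf.emeasure_eq_measure)
qed

definition X :: "nat \<Rightarrow> nat set \<Rightarrow> (nat \<Rightarrow> nat) \<Rightarrow> real" where
  "X N D T = (\<Sum>q\<in>pairs N \<times> D. Z N (fst q) (snd q) T)"

lemma finite_pairs: "finite (pairs N)"
proof -
  have "pairs N \<subseteq> {..<N} \<times> {..<N}" by (auto simp: pairs_def)
  thus ?thesis by (rule finite_subset) auto
qed

lemma EX: assumes "n \<ge> 1" "finite D"
  shows "measure_pmf.expectation (Om n N) (X N D) = real (card (pairs N)) * (\<Sum>d\<in>D. cnt n (\<lambda>t. d dvd t) ^ 2)"
proof -
  have "measure_pmf.expectation (Om n N) (X N D) = (\<Sum>q\<in>pairs N \<times> D. measure_pmf.expectation (Om n N) (Z N (fst q) (snd q)))"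
    unfolding X_def by (rule Bochner_Integration.integral_sum) (rule integrable_Om[OF assms(1)])
  also have "\<dots> = (\<Sum>q\<in>pairs N \<times> D. cnt n (\<lambda>t. snd q dvd t) ^ 2)"
    by (rule sum.cong[OF refl]) (use EZ[OF assms(1)] in auto)
  also have "\<dots> = real (card (pairs N)) * (\<Sum>d\<in>D. cnt n (\<lambda>t. d dvd t) ^ 2)"
    by (simp add: sum_times)
  finally show ?thesis .
qed

lemma EX2: assumes "n \<ge> 1" "finite D" "\<And>d. d \<in> D \<Longrightarrow> d > 0"
  shows "measure_pmf.expectation (Om n N) (\<lambda>T. X N D T * X N D T) \<le>
     (real (card (pairs N)) * (\<Sum>d\<in>D. cnt n (\<lambda>t. d dvd t) ^ 2)) ^ 2
     + real (card (pairs N)) * (\<Sum>d\<in>D. \<Sum>d'\<in>D. real (gcd d d') ^ 2 / (real d * real d') ^ 2)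
     + (\<Sum>p\<in>pairs N. \<Sum>p'\<in>pairs N. of_bool (p \<noteq> p' \<and> nd p p')) * (\<Sum>d\<in>D. \<Sum>d'\<in>D. real (gcd d d') / (real d * real d') ^ 2)"
proof -
  let ?I = "pairs N \<times> D"
  have "measure_pmf.expectation (Om n N) (\<lambda>T. X N D T * X N D T)
     = measure_pmf.expectation (Om n N) (\<lambda>T. \<Sum>q\<in>?I. \<Sum>q'\<in>?I. Z N (fst q) (snd q) T * Z N (fst q') (snd q') T)"
    unfolding X_def by (simp add: sum_product)
  also have "\<dots> = (\<Sum>q\<in>?I. \<Sum>q'\<in>?I. measure_pmf.expectation (Om n N) (\<lambda>T. Z N (fst q) (snd q) T * Z N (fst q') (snd q') T))"
    by (simp add: Bochner_Integration.integral_sum integrable_Om[OF assms(1)])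
  also have "\<dots> \<le> (\<Sum>q\<in>?I. \<Sum>q'\<in>?I.
        1 * (cnt n (\<lambda>t. snd q dvd t) ^ 2 * cnt n (\<lambda>t. snd q' dvd t) ^ 2)
       + of_bool (fst q = fst q') * (real (gcd (snd q) (snd q')) ^ 2 / (real (snd q) * real (snd q')) ^ 2)
       + of_bool (fst q \<noteq> fst q' \<and> nd (fst q) (fst q')) * (real (gcd (snd q) (snd q')) / (real (snd q) * real (snd q')) ^ 2))"
  proof (intro sum_mono)
    fix q q' assume q: "q \<in> ?I" "q' \<in> ?I"
    show "measure_pmf.expectation (Om n N) (\<lambda>T. Z N (fst q) (snd q) T * Z N (fst q') (snd q') T) \<le>
        1 * (cnt n (\<lambda>t. snd q dvd t) ^ 2 * cnt n (\<lambda>t. snd q' dvd t) ^ 2)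
       + of_bool (fst q = fst q') * (real (gcd (snd q) (snd q')) ^ 2 / (real (snd q) * real (snd q')) ^ 2)
       + of_bool (fst q \<noteq> fst q' \<and> nd (fst q) (fst q')) * (real (gcd (snd q) (snd q')) / (real (snd q) * real (snd q')) ^ 2)"
      using EZZ[OF assms(1), of "fst q" N "fst q'" "snd q" "snd q'"] q assms(3) by (auto simp: mem_Times_iff)
  qed
  also have "\<dots> = (\<Sum>p\<in>pairs N. \<Sum>p'\<in>pairs N. (1::real)) * (\<Sum>d\<in>D. \<Sum>d'\<in>D. cnt n (\<lambda>t. d dvd t) ^ 2 * cnt n (\<lambda>t. d' dvd t) ^ 2)
     + (\<Sum>p\<in>pairs N. \<Sum>p'\<in>pairs N. of_bool (p = p')) * (\<Sum>d\<in>D. \<Sum>d'\<in>D. real (gcd d d') ^ 2 / (real d * real d') ^ 2)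
     + (\<Sum>p\<in>pairs N. \<Sum>p'\<in>pairs N. of_bool (p \<noteq> p' \<and> nd p p')) * (\<Sum>d\<in>D. \<Sum>d'\<in>D. real (gcd d d') / (real d * real d') ^ 2)"
    by (simp only: sum.distrib
       sum_sep[OF finite_pairs assms(2), of "\<lambda>_ _. (1::real)" "\<lambda>d d'. cnt n (\<lambda>t. d dvd t) ^ 2 * cnt n (\<lambda>t. d' dvd t) ^ 2"]
       sum_sep[OF finite_pairs assms(2), of "\<lambda>p p'. of_bool (p = p')" "\<lambda>d d'. real (gcd d d') ^ 2 / (real d * real d') ^ 2"]
       sum_sep[OF finite_pairs assms(2), of "\<lambda>p p'. of_bool (p \<noteq> p' \<and> nd p p')" "\<lambda>d d'. real (gcd d d') / (real d * real d') ^ 2"])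
  also have "(\<Sum>p\<in>pairs N. \<Sum>p'\<in>pairs N. (1::real)) * (\<Sum>d\<in>D. \<Sum>d'\<in>D. cnt n (\<lambda>t. d dvd t) ^ 2 * cnt n (\<lambda>t. d' dvd t) ^ 2)
      = (real (card (pairs N)) * (\<Sum>d\<in>D. cnt n (\<lambda>t. d dvd t) ^ 2)) ^ 2"
    by (simp add: power2_eq_square sum_product[symmetric])
  also have "(\<Sum>p\<in>pairs N. \<Sum>p'\<in>pairs N. of_bool (p = p') :: real) = real (card (pairs N))"
    by (simp add: finite_pairs)
  finally show ?thesis .
qed

lemma cheb: assumes "n \<ge> 1" "finite D" "\<And>d. d \<in> D \<Longrightarrow> d > 0"
  and mu: "\<mu> = real (card (pairs N)) * (\<Sum>d\<in>D. cnt n (\<lambda>t. d dvd t) ^ 2)" "\<mu> > 0"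
  shows "measure_pmf.prob (Om n N) {T. X N D T = 0} * \<mu>^2 \<le>
     real (card (pairs N)) * (\<Sum>d\<in>D. \<Sum>d'\<in>D. real (gcd d d') ^ 2 / (real d * real d') ^ 2)
     + (\<Sum>p\<in>pairs N. \<Sum>p'\<in>pairs N. of_bool (p \<noteq> p' \<and> nd p p')) * (\<Sum>d\<in>D. \<Sum>d'\<in>D. real (gcd d d') / (real d * real d') ^ 2)"
proof -
  let ?E = "measure_pmf.expectation (Om n N)"
  have "?E (\<lambda>T. of_bool (X N D T = 0) * \<mu>^2) \<le> ?E (\<lambda>T. X N D T * X N D T - 2 * \<mu> * X N D T + \<mu>^2)"
  proof (rule integral_mono)
    fix T
    show "of_bool (X N D T = 0) * \<mu>^2 \<le> X N D T * X N D T - 2 * \<mu> * X N D T + \<mu>^2"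
    proof (cases "X N D T = 0")
      case False
      have "0 \<le> (X N D T - \<mu>)^2" by simp
      thus ?thesis using False by (simp add: power2_eq_square algebra_simps)
    qed simp
  qed (auto intro: integrable_Om[OF assms(1)])
  also have "?E (\<lambda>T. X N D T * X N D T - 2 * \<mu> * X N D T + \<mu>^2) = ?E (\<lambda>T. X N D T * X N D T) - 2 * \<mu> * ?E (X N D) + \<mu>^2"
    by (simp add: integrable_Om[OF assms(1)])
  also have "?E (X N D) = \<mu>" using EX[OF assms(1,2)] mu by simp
  finally have "?E (\<lambda>T. of_bool (X N D T = 0) * \<mu>^2) \<le> ?E (\<lambda>T. X N D T * X N D T) - \<mu>^2"
    by (simp add: power2_eq_square)
  moreover have "?E (\<lambda>T. of_bool (X N D T = 0) * \<mu>^2) = measure_pmf.prob (Om n N) {T. X N D T = 0} * \<mu>^2"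
    using prob_eq_E[of "Om n N" "\<lambda>T. X N D T = 0"] by simp
  moreover note EX2[OF assms(1,2,3), of N, folded mu(1)]
  ultimately show ?thesis by linarith
qed



lemma card_pairs: "2 * card (pairs N) = N * (N - 1)"
proof (induction N)
  case 0 thus ?case by (simp add: pairs_def)
next
  case (Suc N)
  have e: "pairs (Suc N) = pairs N \<union> (\<lambda>j. (j, N)) ` {..<N}" by (auto simp: pairs_def)
  have "card (pairs (Suc N)) = card (pairs N) + card ((\<lambda>j. (j, N)) ` {..<N})"
    unfolding e by (rule card_Un_disjoint) (use finite_pairs[of N] in \<open>auto simp: pairs_def\<close>)
  also have "card ((\<lambda>j. (j, N)) ` {..<N}) = N" by (subst card_image) (auto simp: inj_on_def)
  finally show ?case using Suc by (cases N) (auto simp: algebra_simps)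
qed

lemma card_pairs_le: "real (card (pairs N)) \<le> real N ^ 2"
proof -
  have "2 * card (pairs N) \<le> N * N" unfolding card_pairs by (intro mult_mono) auto
  hence "real (2 * card (pairs N)) \<le> real (N * N)" by (simp only: of_nat_le_iff)
  thus ?thesis by (simp add: power2_eq_square)
qed

lemma card_pairs_ge: assumes "N \<ge> 2" shows "real (card (pairs N)) \<ge> real N ^ 2 / 4"
proof -
  have "real (2 * card (pairs N)) = real N * (real N - 1)" unfolding card_pairs using assms by (simp add: of_nat_diff)
  moreover have "real N - 1 \<ge> real N / 2" using assms by simp
  ultimately have "2 * real (card (pairs N)) \<ge> real N * (real N / 2)"
    by (metis of_nat_mult of_nat_numeral mult_left_mono of_nat_0_le_iff)
  thus ?thesis by (simp add: power2_eq_square)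
qed

lemma count_fst: "(\<Sum>p'\<in>pairs N. of_bool (a = fst p') :: real) \<le> real N"
proof -
  have "pairs N \<inter> {p'. a = fst p'} \<subseteq> {a} \<times> {..<N}" by (auto simp: pairs_def)
  hence "card (pairs N \<inter> {p'. a = fst p'}) \<le> card ({a} \<times> {..<N})" by (intro card_mono) auto
  thus ?thesis by (simp add: finite_pairs)
qed

lemma count_snd: "(\<Sum>p'\<in>pairs N. of_bool (a = snd p') :: real) \<le> real N"
proof -
  have "pairs N \<inter> {p'. a = snd p'} \<subseteq> {..<N} \<times> {a}" by (auto simp: pairs_def)
  hence "card (pairs N \<inter> {p'. a = snd p'}) \<le> card ({..<N} \<times> {a})" by (intro card_mono) auto
  thus ?thesis by (simp add: finite_pairs)
qed

lemma count_nd: "(\<Sum>p\<in>pairs N. \<Sum>p'\<in>pairs N. of_bool (p \<noteq> p' \<and> nd p p') :: real) \<le> 4 * real N ^ 3"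
proof -
  have "(\<Sum>p\<in>pairs N. \<Sum>p'\<in>pairs N. of_bool (p \<noteq> p' \<and> nd p p') :: real) \<le> (\<Sum>p\<in>pairs N. 4 * real N)"
  proof (rule sum_mono)
    fix p
    have "(\<Sum>p'\<in>pairs N. of_bool (p \<noteq> p' \<and> nd p p') :: real) \<le>
      (\<Sum>p'\<in>pairs N. of_bool (fst p = fst p') + of_bool (fst p = snd p') + of_bool (snd p = fst p') + of_bool (snd p = snd p'))"
      by (rule sum_mono) (auto simp: nd_def)
    also have "\<dots> \<le> 4 * real N"
      using count_fst[of "fst p" N] count_snd[of "fst p" N] count_fst[of "snd p" N] count_snd[of "snd p" N]
      by (simp add: sum.distrib)
    finally show "(\<Sum>p'\<in>pairs N. of_bool (p \<noteq> p' \<and> nd p p') :: real) \<le> 4 * real N" .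
  qed
  also have "\<dots> = real (card (pairs N)) * (4 * real N)" by simp
  also have "\<dots> \<le> real N ^ 2 * (4 * real N)" by (intro mult_right_mono card_pairs_le) auto
  finally show ?thesis by (simp add: power3_eq_cube power2_eq_square)
qed

lemma harm_sqrt: "(\<Sum>g\<in>{1..m}. 1 / real g) \<le> 2 * sqrt (real m)"
proof (induction m)
  case (Suc m)
  have s: "sqrt (real m) \<le> sqrt (real (Suc m))" by simp
  have t1: "sqrt (real (Suc m)) \<ge> 1" by simp
  have sq: "sqrt (real (Suc m)) ^ 2 = real m + 1" "sqrt (real m) ^ 2 = real m" by simp_all
  have "1 / real (Suc m) \<le> 2 * sqrt (real (Suc m)) - 2 * sqrt (real m)"
  proof -
    let ?t = "sqrt (real (Suc m))" and ?s = "sqrt (real m)"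
    have "(?t - ?s) * (?t + ?s) = 1" using sq by (simp add: algebra_simps power2_eq_square)
    moreover have "?t + ?s \<le> 2 * ?t" using s by simp
    moreover have "?s \<ge> 0" by simp
    moreover have "?t - ?s \<ge> 0" using s by simp
    ultimately have "(?t - ?s) * (?t + ?s) \<le> (?t - ?s) * (2 * ?t)" by (intro mult_left_mono) auto
    hence "2 * (?t - ?s) * ?t \<ge> 1" using \<open>(?t - ?s) * (?t + ?s) = 1\<close> by (simp add: algebra_simps)
    hence "2 * (?t - ?s) \<ge> 1 / ?t" using t1 by (simp add: field_simps)
    moreover have "1 / ?t \<ge> 1 / real (Suc m)"
    proof -
      have "?t * 1 \<le> ?t * ?t" by (rule mult_left_mono[OF t1]) simp
      moreover have "?t * ?t = real (Suc m)" by simp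
      ultimately have "?t \<le> real (Suc m)" by linarith
      thus ?thesis using t1 by (intro divide_left_mono) auto
    qed
    ultimately show ?thesis by simp
  qed
  moreover have "(\<Sum>g\<in>{1..Suc m}. 1 / real g) = (\<Sum>g\<in>{1..m}. 1 / real g) + 1 / real (Suc m)"
    by simp
  ultimately show ?case using Suc.IH by linarith
qed simp



lemma real_div_le: "g > 0 \<Longrightarrow> real (x div g) \<le> real x / real g"
proof -
  assume g: "g > 0"
  have "real (x div g) * real g \<le> real x"
    by (metis of_nat_le_iff of_nat_mult div_times_less_eq_dividend)
  thus ?thesis using g by (simp add: field_simps)
qed

lemma count_mult: assumes "g \<ge> 1"
  shows "(\<Sum>d\<in>{a<..2*a}. of_bool (g dvd d) :: real) \<le> real (2*a) / real g"
proof -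
  have "{a<..2*a} \<inter> {d. g dvd d} \<subseteq> {t\<in>{1..2*a}. g dvd t}" by auto
  hence "card ({a<..2*a} \<inter> {d. g dvd d}) \<le> card {t\<in>{1..2*a}. g dvd t}" by (intro card_mono) auto
  also have "\<dots> = 2*a div g" using assms by (intro card_mult_set) auto
  finally have "real (card ({a<..2*a} \<inter> {d. g dvd d})) \<le> real (2*a div g)" by (simp only: of_nat_le_iff)
  also have "\<dots> \<le> real (2*a) / real g" using assms by (intro real_div_le) auto
  finally show ?thesis by simp
qed

lemma gcd_sum: fixes w :: "nat \<Rightarrow> real" assumes w: "\<And>g. w g \<ge> 0"
  shows "(\<Sum>d\<in>{a<..2*a}. \<Sum>d'\<in>{a<..2*a}. w (gcd d d')) \<le> (\<Sum>g\<in>{1..2*a}. w g * (real (2*a) / real g)^2)"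
proof -
  let ?D = "{a<..2*a}" and ?G = "{1..2*a}"
  let ?F = "\<lambda>d g. (of_bool (g dvd d) :: real)"
  have "(\<Sum>d\<in>?D. \<Sum>d'\<in>?D. w (gcd d d')) \<le> (\<Sum>d\<in>?D. \<Sum>d'\<in>?D. \<Sum>g\<in>?G. ?F d g * ?F d' g * w g)"
  proof (intro sum_mono)
    fix d d' assume d: "d \<in> ?D" "d' \<in> ?D"
    have gG: "gcd d d' \<in> ?G" using d by (auto intro: order.trans[OF gcd_le1_nat] simp: Suc_le_eq)
    have "w (gcd d d') = ?F d (gcd d d') * ?F d' (gcd d d') * w (gcd d d')" by simp
    also have "\<dots> \<le> (\<Sum>g\<in>?G. ?F d g * ?F d' g * w g)"
      by (rule member_le_sum[OF gG]) (auto simp: w)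
    finally show "w (gcd d d') \<le> (\<Sum>g\<in>?G. ?F d g * ?F d' g * w g)" .
  qed
  also have "\<dots> = (\<Sum>d\<in>?D. \<Sum>g\<in>?G. \<Sum>d'\<in>?D. ?F d g * ?F d' g * w g)"
    by (rule sum.cong[OF refl], rule sum.swap)
  also have "\<dots> = (\<Sum>g\<in>?G. \<Sum>d\<in>?D. \<Sum>d'\<in>?D. ?F d g * ?F d' g * w g)"
    by (rule sum.swap)
  also have "\<dots> = (\<Sum>g\<in>?G. w g * ((\<Sum>d\<in>?D. ?F d g) * (\<Sum>d'\<in>?D. ?F d' g)))"
    by (rule sum.cong[OF refl]) (simp only: sum_distrib_left sum_distrib_right mult_ac)
  also have "\<dots> \<le> (\<Sum>g\<in>?G. w g * (real (2*a) / real g)^2)"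
  proof (rule sum_mono)
    fix g assume g: "g \<in> ?G"
    have "(\<Sum>d\<in>?D. ?F d g) * (\<Sum>d'\<in>?D. ?F d' g) \<le> (real (2*a) / real g) * (real (2*a) / real g)"
      using g by (intro mult_mono count_mult sum_nonneg) auto
    thus "w g * ((\<Sum>d\<in>?D. ?F d g) * (\<Sum>d'\<in>?D. ?F d' g)) \<le> w g * (real (2*a) / real g)^2"
      by (intro mult_left_mono w) (simp add: power2_eq_square)
  qed
  finally show ?thesis .
qed

lemma H2_bound: assumes "a \<ge> 1"
  shows "(\<Sum>d\<in>{a<..2*a}. \<Sum>d'\<in>{a<..2*a}. real (gcd d d') ^ 2 / (real d * real d') ^ 2) \<le> 8 / real a"
proof -
  have A: "real a > 0" using assms by simp
  have "(\<Sum>d\<in>{a<..2*a}. \<Sum>d'\<in>{a<..2*a}. real (gcd d d') ^ 2 / (real d * real d') ^ 2)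
      \<le> (\<Sum>d\<in>{a<..2*a}. \<Sum>d'\<in>{a<..2*a}. real (gcd d d') ^ 2 / (real a * real a) ^ 2)"
  proof (intro sum_mono divide_left_mono)
    fix d d' assume "d \<in> {a<..2*a}" "d' \<in> {a<..2*a}"
    hence "real a \<le> real d" "real a \<le> real d'" by auto
    thus "(real a * real a) ^ 2 \<le> (real d * real d') ^ 2" using A by (intro power_mono mult_mono) auto
  qed (use A in auto)
  also have "\<dots> = (\<Sum>d\<in>{a<..2*a}. \<Sum>d'\<in>{a<..2*a}. real (gcd d d') ^ 2) / (real a * real a) ^ 2"
    by (simp add: sum_divide_distrib)
  also have "\<dots> \<le> (\<Sum>g\<in>{1..2*a}. real g ^ 2 * (real (2*a) / real g)^2) / (real a * real a) ^ 2"
    by (intro divide_right_mono gcd_sum[of "\<lambda>g. real g ^ 2"]) auto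
  also have "(\<Sum>g\<in>{1..2*a}. real g ^ 2 * (real (2*a) / real g)^2) = (\<Sum>g\<in>{1..2*a}. 4 * real a ^ 2)"
    by (rule sum.cong[OF refl]) (auto simp: field_simps power2_eq_square)
  also have "\<dots> = 8 * real a ^ 3" by (simp add: power2_eq_square power3_eq_cube)
  also have "8 * real a ^ 3 / (real a * real a) ^ 2 = 8 / real a" using A by (simp add: field_simps power2_eq_square power3_eq_cube)
  finally show ?thesis .
qed

lemma H1_bound: assumes "a \<ge> 1"
  shows "(\<Sum>d\<in>{a<..2*a}. \<Sum>d'\<in>{a<..2*a}. real (gcd d d') / (real d * real d') ^ 2) \<le> 8 * sqrt (2 * real a) / real a ^ 2"
proof -
  have A: "real a > 0" using assms by simp
  have "(\<Sum>d\<in>{a<..2*a}. \<Sum>d'\<in>{a<..2*a}. real (gcd d d') / (real d * real d') ^ 2)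
      \<le> (\<Sum>d\<in>{a<..2*a}. \<Sum>d'\<in>{a<..2*a}. real (gcd d d') / (real a * real a) ^ 2)"
  proof (intro sum_mono divide_left_mono)
    fix d d' assume "d \<in> {a<..2*a}" "d' \<in> {a<..2*a}"
    hence "real a \<le> real d" "real a \<le> real d'" by auto
    thus "(real a * real a) ^ 2 \<le> (real d * real d') ^ 2" using A by (intro power_mono mult_mono) auto
  qed (use A in auto)
  also have "\<dots> = (\<Sum>d\<in>{a<..2*a}. \<Sum>d'\<in>{a<..2*a}. real (gcd d d')) / (real a * real a) ^ 2"
    by (simp add: sum_divide_distrib)
  also have "\<dots> \<le> (\<Sum>g\<in>{1..2*a}. real g * (real (2*a) / real g)^2) / (real a * real a) ^ 2"
    by (intro divide_right_mono gcd_sum[of "\<lambda>g. real g"]) auto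
  also have "(\<Sum>g\<in>{1..2*a}. real g * (real (2*a) / real g)^2) = 4 * real a ^ 2 * (\<Sum>g\<in>{1..2*a}. 1 / real g)"
    by (simp add: sum_distrib_left) (rule sum.cong[OF refl], auto simp: field_simps power2_eq_square)
  also have "4 * real a ^ 2 * (\<Sum>g\<in>{1..2*a}. 1 / real g) / (real a * real a) ^ 2 \<le> 4 * real a ^ 2 * (2 * sqrt (real (2*a))) / (real a * real a) ^ 2"
    by (intro divide_right_mono mult_left_mono harm_sqrt) auto
  also have "4 * real a ^ 2 * (2 * sqrt (real (2*a))) / (real a * real a) ^ 2 = 8 * sqrt (2 * real a) / real a ^ 2"
    using A by (simp add: field_simps power2_eq_square)
  finally show ?thesis .
qed

lemma S_lower: assumes "a \<ge> 1" "4 * a \<le> n"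
  shows "(\<Sum>d\<in>{a<..2*a}. cnt n (\<lambda>t. d dvd t) ^ 2) \<ge> 1 / (16 * real a)"
proof -
  have A: "real a > 0" using assms by simp
  have "(\<Sum>d\<in>{a<..2*a}. (1 / (4 * real a)) ^ 2) \<le> (\<Sum>d\<in>{a<..2*a}. cnt n (\<lambda>t. d dvd t) ^ 2)"
  proof (rule sum_mono)
    fix d assume d: "d \<in> {a<..2*a}"
    hence "d > 0" "2 * d \<le> n" using assms by auto
    hence "cnt n (\<lambda>t. d dvd t) \<ge> 1 / (2 * real d)" by (rule cnt_dvd_ge)
    moreover have "1 / (2 * real d) \<ge> 1 / (4 * real a)" using d \<open>d > 0\<close> by (intro divide_left_mono) auto
    ultimately show "(1 / (4 * real a)) ^ 2 \<le> cnt n (\<lambda>t. d dvd t) ^ 2"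
      using A by (intro power_mono) auto
  qed
  also have "(\<Sum>d\<in>{a<..2*a}. (1 / (4 * real a)) ^ 2) = 1 / (16 * real a)"
    using A by (simp add: power2_eq_square field_simps)
  finally show ?thesis .
qed

lemma aux: fixes x::real assumes "x > 1" shows "1/x^2 + 1/x \<le> 1/(x-1)"
proof -
  have p: "x - 1 > 0" "x > 0" using assms by auto
  have "1/x^2 + 1/x = (1+x)/x^2" using p by (simp add: field_simps power2_eq_square)
  also have "\<dots> \<le> 1/(x-1)" using p by (simp add: field_simps power2_eq_square)
  finally show ?thesis .
qed

lemma inv_sq_sum: assumes "m \<ge> 1"
  shows "(\<Sum>g\<in>{m..K}. 1 / real g ^ 2) \<le> 2 / real m"
proof (cases "K \<ge> m")
  case True
  have "(\<Sum>g\<in>{m..K}. 1 / real g ^ 2) \<le> 2 / real m - 1 / real K"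
    using True
  proof (induction K rule: dec_induct)
    case base
    have "1 / real m ^ 2 \<le> 1 / real m" using assms by (simp add: field_simps power2_eq_square)
    thus ?case by simp
  next
    case (step K)
    have K: "real K \<ge> 1" using step assms by simp
    have "1 / real (Suc K) ^ 2 + 1 / real (Suc K) \<le> 1 / real K"
      using aux[of "real K + 1"] K by (simp add: add.commute)
    moreover have "(\<Sum>g\<in>{m..Suc K}. 1 / real g ^ 2) = (\<Sum>g\<in>{m..K}. 1 / real g ^ 2) + 1 / real (Suc K) ^ 2"
      using step by simp
    ultimately show ?case using step by linarith
  qed
  moreover have "1 / real K \<ge> 0" by simp
  ultimately show ?thesis by linarith
qed (use assms in simp)



lemma T_law_Om: "T_law \<alpha> N = Om (nat \<lfloor>exp (\<alpha> * real N)\<rfloor>) N"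
  unfolding T_law_def Om_def sample_set_eq ..

lemma supp: assumes "n \<ge> 1" "T \<in> set_pmf (Om n N)" "x < N" shows "T x \<in> {1..n}"
  using assms by (auto simp: set_Om PiE_dflt_def)

lemma max_gcd_ge: assumes "j < k" "k < N" shows "gcd (T j) (T k) \<le> max_gcd N T"
proof -
  have e: "{gcd (T j) (T k) | j k. j < k \<and> k < N} = (\<lambda>(j,k). gcd (T j) (T k)) ` pairs N"
    by (auto simp: pairs_def)
  show ?thesis unfolding max_gcd_def e
    by (rule Max_ge) (use finite_pairs assms in \<open>auto simp: pairs_def\<close>)
qed

lemma max_gcd_ex: assumes "N \<ge> 2" shows "\<exists>j k. j < k \<and> k < N \<and> max_gcd N T = gcd (T j) (T k)"
proof -
  have e: "{gcd (T j) (T k) | j k. j < k \<and> k < N} = (\<lambda>(j,k). gcd (T j) (T k)) ` pairs N"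
    by (auto simp: pairs_def)
  have "(0, 1) \<in> pairs N" using assms by (auto simp: pairs_def)
  hence "max_gcd N T \<in> (\<lambda>(j,k). gcd (T j) (T k)) ` pairs N"
    unfolding max_gcd_def e by (intro Max_in) (use finite_pairs in auto)
  thus ?thesis by (auto simp: pairs_def)
qed

lemma Z_nonneg: "Z N p d T \<ge> 0" unfolding Z_def by (intro prod_nonneg) auto

lemma X_nonneg: "X N D T \<ge> 0" unfolding X_def by (intro sum_nonneg Z_nonneg)

lemma Z_one: assumes "d dvd T j" "d dvd T k" shows "Z N (j,k) d T = 1"
  unfolding Z_def by (rule prod.neutral) (use assms in \<open>auto simp: Zc_def\<close>)

lemma X_pos_imp: assumes "n \<ge> 1" "T \<in> set_pmf (Om n N)" "X N D T \<noteq> 0" "\<And>d. d \<in> D \<Longrightarrow> d > a"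
  shows "max_gcd N T > a"
proof -
  obtain q where q: "q \<in> pairs N \<times> D" "Z N (fst q) (snd q) T \<noteq> 0"
    using assms(3) unfolding X_def by (rule sum.not_neutral_contains_not_neutral)
  obtain j k d where jkd: "q = ((j,k),d)" "j < k" "k < N" "d \<in> D" using q(1) by (auto simp: pairs_def)
  have "Zc (j,k) d j (T j)" "Zc (j,k) d k (T k)"
    using q(2) jkd unfolding Z_def by (auto simp: prod_zero_iff)
  hence dv: "d dvd T j" "d dvd T k" by (auto simp: Zc_def)
  have "T j \<in> {1..n}" using supp[OF assms(1,2)] jkd by auto
  hence "gcd (T j) (T k) > 0" by simp
  hence "d \<le> gcd (T j) (T k)" using dv by (intro dvd_imp_le) auto
  also have "\<dots> \<le> max_gcd N T" using max_gcd_ge jkd by auto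
  finally show ?thesis using assms(4)[OF jkd(4)] by simp
qed

lemma prob_mono_supp: assumes "\<And>T. T \<in> set_pmf M \<Longrightarrow> P T \<Longrightarrow> Q T"
  shows "measure_pmf.prob M {T. P T} \<le> measure_pmf.prob M {T. Q T}"
proof -
  have "measure_pmf.prob M {T. P T} = measure_pmf.prob M ({T. P T} \<inter> set_pmf M)"
    by (rule measure_Int_set_pmf[symmetric])
  also have "\<dots> \<le> measure_pmf.prob M {T. Q T}"
    by (rule measure_pmf.finite_measure_mono) (use assms in auto)
  finally show ?thesis .
qed

lemma alg1: fixes x y u :: real assumes "x > 0" "y > 0"
  shows "(x^2*(8/y) + 4*x^3*(8*u/y^2)) / (x^2/(64*y))^2 = 4096*(8*y/x^2 + 32*u/x)"
  using assms by (simp add: field_simps power2_eq_square power3_eq_cube)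

lemma bad1: assumes "N \<ge> 2" "a \<ge> 1" "4 * a \<le> n"
  shows "measure_pmf.prob (Om n N) {T. max_gcd N T \<le> a}
     \<le> 4096 * (8 * real a / real N ^ 2 + 32 * sqrt (2 * real a) / real N)"
proof -
  have n: "n \<ge> 1" using assms by simp
  let ?D = "{a<..2*a}"
  define \<mu> where "\<mu> = real (card (pairs N)) * (\<Sum>d\<in>?D. cnt n (\<lambda>t. d dvd t) ^ 2)"
  have NN: "real N \<ge> 2" using assms by simp
  have A: "real a \<ge> 1" using assms by simp
  have mu_ge: "\<mu> \<ge> real N ^ 2 / (64 * real a)"
  proof -
    have "real N ^ 2 / 4 * (1 / (16 * real a)) \<le> \<mu>"
      unfolding \<mu>_def by (rule mult_mono[OF card_pairs_ge[OF assms(1)] S_lower[OF assms(2,3)]]) auto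
    thus ?thesis by (simp add: field_simps)
  qed
  have L: "real N ^ 2 / (64 * real a) > 0" using NN A by simp
  have mu_pos: "\<mu> > 0" using mu_ge L by linarith
  have "measure_pmf.prob (Om n N) {T. max_gcd N T \<le> a} \<le> measure_pmf.prob (Om n N) {T. X N ?D T = 0}"
  proof (rule prob_mono_supp)
    fix T assume T: "T \<in> set_pmf (Om n N)" "max_gcd N T \<le> a"
    show "X N ?D T = 0"
    proof (rule ccontr)
      assume "X N ?D T \<noteq> 0"
      hence "max_gcd N T > a" by (rule X_pos_imp[OF n T(1)]) auto
      thus False using T(2) by simp
    qed
  qed
  moreover have "measure_pmf.prob (Om n N) {T. X N ?D T = 0} * \<mu>^2 \<le>
     real N ^ 2 * (8 / real a) + 4 * real N ^ 3 * (8 * sqrt (2 * real a) / real a ^ 2)"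
  proof -
    have "measure_pmf.prob (Om n N) {T. X N ?D T = 0} * \<mu>^2 \<le>
     real (card (pairs N)) * (\<Sum>d\<in>?D. \<Sum>d'\<in>?D. real (gcd d d') ^ 2 / (real d * real d') ^ 2)
     + (\<Sum>p\<in>pairs N. \<Sum>p'\<in>pairs N. of_bool (p \<noteq> p' \<and> nd p p')) * (\<Sum>d\<in>?D. \<Sum>d'\<in>?D. real (gcd d d') / (real d * real d') ^ 2)"
      by (rule cheb[OF n _ _ \<mu>_def mu_pos]) auto
    also have "\<dots> \<le> real N ^ 2 * (8 / real a) + 4 * real N ^ 3 * (8 * sqrt (2 * real a) / real a ^ 2)"
    proof (rule add_mono)
      show "real (card (pairs N)) * (\<Sum>d\<in>?D. \<Sum>d'\<in>?D. real (gcd d d') ^ 2 / (real d * real d') ^ 2) \<le> real N ^ 2 * (8 / real a)"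
        by (rule mult_mono[OF card_pairs_le H2_bound[OF assms(2)]]) (auto intro!: sum_nonneg)
      show "(\<Sum>p\<in>pairs N. \<Sum>p'\<in>pairs N. of_bool (p \<noteq> p' \<and> nd p p')) * (\<Sum>d\<in>?D. \<Sum>d'\<in>?D. real (gcd d d') / (real d * real d') ^ 2)
         \<le> 4 * real N ^ 3 * (8 * sqrt (2 * real a) / real a ^ 2)"
        by (rule mult_mono[OF count_nd H1_bound[OF assms(2)]]) (auto intro!: sum_nonneg)
    qed
    finally show ?thesis .
  qed
  moreover have "measure_pmf.prob (Om n N) {T. X N ?D T = 0} * (real N ^ 2 / (64 * real a))^2
     \<le> measure_pmf.prob (Om n N) {T. X N ?D T = 0} * \<mu>^2"
    using mu_ge L by (intro mult_left_mono power_mono) auto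
  ultimately have "measure_pmf.prob (Om n N) {T. max_gcd N T \<le> a} * (real N ^ 2 / (64 * real a))^2
     \<le> real N ^ 2 * (8 / real a) + 4 * real N ^ 3 * (8 * sqrt (2 * real a) / real a ^ 2)"
    by (smt (verit) L mult_right_mono zero_le_power)
  hence "measure_pmf.prob (Om n N) {T. max_gcd N T \<le> a}
     \<le> (real N ^ 2 * (8 / real a) + 4 * real N ^ 3 * (8 * sqrt (2 * real a) / real a ^ 2)) / (real N ^ 2 / (64 * real a))^2"
    using pos_le_divide_eq[OF zero_less_power[OF L, of 2]] by blast
  also have "\<dots> = 4096 * (8 * real a / real N ^ 2 + 32 * sqrt (2 * real a) / real N)"
    by (rule alg1) (use NN A in auto)
  finally show ?thesis .
qed



lemma bad2: assumes "N \<ge> 2" "n \<ge> 1" "m \<ge> 1"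
  shows "measure_pmf.prob (Om n N) {T. max_gcd N T \<ge> m} \<le> 2 * real N ^ 2 / real m"
proof -
  let ?D = "{m..n}"
  have "measure_pmf.prob (Om n N) {T. max_gcd N T \<ge> m}
      = measure_pmf.expectation (Om n N) (\<lambda>T. of_bool (max_gcd N T \<ge> m))" by (rule prob_eq_E)
  also have "\<dots> \<le> measure_pmf.expectation (Om n N) (X N ?D)"
  proof (rule integral_mono_AE[OF integrable_Om[OF assms(2)] integrable_Om[OF assms(2)]], rule AE_pmfI)
    fix T assume T: "T \<in> set_pmf (Om n N)"
    show "of_bool (max_gcd N T \<ge> m) \<le> X N ?D T"
    proof (cases "max_gcd N T \<ge> m")
      case True
      obtain j k where jk: "j < k" "k < N" "max_gcd N T = gcd (T j) (T k)"
        using max_gcd_ex[OF assms(1)] by blast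
      let ?g = "gcd (T j) (T k)"
      have Tj: "T j \<in> {1..n}" using supp[OF assms(2) T] jk by auto
      have gle: "?g \<le> T j" using Tj by (intro gcd_le1_nat) auto
      have gn: "?g \<le> n" by (rule order.trans[OF gle]) (use Tj in simp)
      have gD: "?g \<in> ?D" using True jk gn by auto
      have "1 = Z N (j,k) ?g T" by (rule Z_one[symmetric]) auto
      also have "\<dots> \<le> X N ?D T"
      proof -
        have i: "((j,k),?g) \<in> pairs N \<times> ?D" using gD jk by (auto simp: pairs_def)
        have "Z N (fst ((j,k),?g)) (snd ((j,k),?g)) T \<le> (\<Sum>q\<in>pairs N \<times> ?D. Z N (fst q) (snd q) T)"
          by (rule member_le_sum[OF i]) (auto simp: Z_nonneg finite_pairs)
        thus ?thesis unfolding X_def by simp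
      qed
      finally show ?thesis using True by simp
    qed (simp add: X_nonneg)
  qed
  also have "\<dots> = real (card (pairs N)) * (\<Sum>d\<in>?D. cnt n (\<lambda>t. d dvd t) ^ 2)"
    by (rule EX[OF assms(2)]) auto
  also have "\<dots> \<le> real N ^ 2 * (2 / real m)"
  proof (rule mult_mono[OF card_pairs_le])
    have "(\<Sum>d\<in>?D. cnt n (\<lambda>t. d dvd t) ^ 2) \<le> (\<Sum>d\<in>?D. 1 / real d ^ 2)"
    proof (rule sum_mono)
      fix d assume "d \<in> ?D"
      hence d: "d > 0" using assms by auto
      have "cnt n (\<lambda>t. d dvd t) ^ 2 \<le> (1 / real d) ^ 2"
        by (intro power_mono cnt_dvd_le d cnt_nonneg)
      thus "cnt n (\<lambda>t. d dvd t) ^ 2 \<le> 1 / real d ^ 2" by (simp add: power_divide)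
    qed
    also have "\<dots> \<le> 2 / real m" by (rule inv_sq_sum[OF assms(3)])
    finally show "(\<Sum>d\<in>?D. cnt n (\<lambda>t. d dvd t) ^ 2) \<le> 2 / real m" .
  qed (auto intro!: sum_nonneg)
  also have "real N ^ 2 * (2 / real m) = 2 * real N ^ 2 / real m" by simp
  finally show ?thesis .
qed

lemma nat_ceiling_le: assumes "x \<le> real k" shows "nat \<lceil>x\<rceil> \<le> k"
proof -
  have "\<lceil>x\<rceil> \<le> int k" using assms by (simp add: ceiling_le_iff)
  thus ?thesis by linarith
qed

lemma good_bound:
  assumes "N \<ge> 2" "a = nat \<lceil>real N powr (2 - \<eta>)\<rceil>" "m = nat \<lceil>real N powr (2 + \<eta>)\<rceil>" "4 * a \<le> n"
  shows "measure_pmf.prob (Om n N) {T. real N powr (2 - \<eta>) < real (max_gcd N T) \<and> real (max_gcd N T) < real N powr (2 + \<eta>)}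
     \<ge> 1 - 4096 * (8 * real a / real N ^ 2 + 32 * sqrt (2 * real a) / real N) - 2 * real N ^ 2 / real m"
proof -
  have x0: "real N powr (2 - \<eta>) > 0" using assms by simp
  have "-1 < real N powr (2 - \<eta>)" using x0 by linarith
  hence c0: "0 \<le> \<lceil>real N powr (2 - \<eta>)\<rceil>" by (simp only: zero_le_ceiling)
  have "real a = real_of_int \<lceil>real N powr (2 - \<eta>)\<rceil>" unfolding assms(2) using c0 by (rule of_nat_nat)
  hence xa: "real N powr (2 - \<eta>) \<le> real a" by simp
  have xm0: "real N powr (2 + \<eta>) > 0" using assms by simp
  have "real a > 0" using xa x0 by linarith
  hence a1: "a \<ge> 1" by simp
  have m1: "m \<ge> 1" using xm0 unfolding assms(3) by linarith
  have n1: "n \<ge> 1" using a1 assms(4) by simp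
  let ?G = "\<lambda>T. real N powr (2 - \<eta>) < real (max_gcd N T) \<and> real (max_gcd N T) < real N powr (2 + \<eta>)"
  let ?E = "measure_pmf.expectation (Om n N)"
  have "?E (\<lambda>T. 1 - of_bool (max_gcd N T \<le> a) - of_bool (max_gcd N T \<ge> m)) \<le> ?E (\<lambda>T. (of_bool (?G T) :: real))"
  proof (rule integral_mono[OF integrable_Om[OF n1] integrable_Om[OF n1]])
    fix T
    show "1 - of_bool (max_gcd N T \<le> a) - of_bool (max_gcd N T \<ge> m) \<le> (of_bool (?G T) :: real)"
    proof (cases "?G T")
      case False
      hence "real (max_gcd N T) \<le> real N powr (2 - \<eta>) \<or> real (max_gcd N T) \<ge> real N powr (2 + \<eta>)" by auto
      hence "max_gcd N T \<le> a \<or> max_gcd N T \<ge> m"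
      proof
        assume "real (max_gcd N T) \<le> real N powr (2 - \<eta>)"
        hence "real (max_gcd N T) \<le> real a" using xa by linarith
        thus ?thesis by simp
      next
        assume "real (max_gcd N T) \<ge> real N powr (2 + \<eta>)"
        thus ?thesis unfolding assms(3) using nat_ceiling_le by blast
      qed
      thus ?thesis by auto
    qed auto
  qed
  also have "?E (\<lambda>T. (of_bool (?G T) :: real)) = measure_pmf.prob (Om n N) {T. ?G T}" by (rule prob_eq_E[symmetric])
  also have "?E (\<lambda>T. (1::real) - of_bool (max_gcd N T \<le> a) - of_bool (max_gcd N T \<ge> m))
      = 1 - measure_pmf.prob (Om n N) {T. max_gcd N T \<le> a} - measure_pmf.prob (Om n N) {T. max_gcd N T \<ge> m}"
    by (simp add: integrable_Om[OF n1] prob_eq_E)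
  finally have "1 - measure_pmf.prob (Om n N) {T. max_gcd N T \<le> a} - measure_pmf.prob (Om n N) {T. max_gcd N T \<ge> m}
      \<le> measure_pmf.prob (Om n N) {T. ?G T}" .
  moreover note bad1[OF assms(1) a1 assms(4)] bad2[OF assms(1) n1 m1]
  ultimately show ?thesis by linarith
qed



lemma powr_split: fixes x h :: real assumes "x > 0" shows "x powr (2 - h) = x powr (- h) * x ^ 2"
proof -
  have "x powr (2 - h) = x powr (- h + 2)" by simp
  also have "\<dots> = x powr (- h) * x powr 2" by (rule powr_add)
  also have "x powr 2 = x ^ 2" using assms by simp
  finally show ?thesis .
qed

lemma powr_split': fixes x h :: real assumes "x > 0" shows "x powr (2 + h) = x powr h * x ^ 2"
proof -
  have "x powr (2 + h) = x powr (h + 2)" by (simp add: add.commute)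
  also have "\<dots> = x powr h * x powr 2" by (rule powr_add)
  also have "x powr 2 = x ^ 2" using assms by simp
  finally show ?thesis .
qed

lemma ceil_bounds: assumes "x \<ge> 0" shows "x \<le> real (nat \<lceil>x\<rceil>)" "real (nat \<lceil>x\<rceil>) < x + 1"
proof -
  have "-1 < x" using assms by linarith
  hence c0: "0 \<le> \<lceil>x\<rceil>" by (simp only: zero_le_ceiling)
  have e: "real (nat \<lceil>x\<rceil>) = real_of_int \<lceil>x\<rceil>" using c0 by (rule of_nat_nat)
  show "x \<le> real (nat \<lceil>x\<rceil>)" unfolding e by simp
  show "real (nat \<lceil>x\<rceil>) < x + 1" unfolding e using ceiling_correct[of x] by linarith
qed

lemma floor_bound: assumes "y \<ge> 0" shows "real (nat \<lfloor>y\<rfloor>) > y - 1"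
proof -
  have "0 \<le> \<lfloor>y\<rfloor>" using assms by simp
  hence e: "real (nat \<lfloor>y\<rfloor>) = real_of_int \<lfloor>y\<rfloor>" by (rule of_nat_nat)
  show ?thesis unfolding e by linarith
qed

lemma e_bound:
  assumes "\<eta> > 0" "N \<ge> 1"
  shows "4096 * (8 * real (nat \<lceil>real N powr (2 - \<eta>)\<rceil>) / real N ^ 2 + 32 * sqrt (2 * real (nat \<lceil>real N powr (2 - \<eta>)\<rceil>)) / real N)
           + 2 * real N ^ 2 / real (nat \<lceil>real N powr (2 + \<eta>)\<rceil>)
     \<le> 4096 * (8 * (real N powr (- \<eta>) + 1 / real N ^ 2) + 32 * sqrt (2 * real N powr (- \<eta>) + 2 * (1 / real N ^ 2)))
           + 2 * real N powr (- \<eta>)"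
proof -
  let ?a = "real (nat \<lceil>real N powr (2 - \<eta>)\<rceil>)" and ?m = "real (nat \<lceil>real N powr (2 + \<eta>)\<rceil>)"
  let ?p = "real N powr (- \<eta>)"
  have N: "real N > 0" using assms by simp
  have N2: "real N ^ 2 > 0" using N by simp
  have a_le: "?a \<le> ?p * real N ^ 2 + 1"
    using ceil_bounds(2)[of "real N powr (2 - \<eta>)"] powr_split[OF N, of \<eta>] by simp
  have m_ge: "?m \<ge> real N powr \<eta> * real N ^ 2"
    using ceil_bounds(1)[of "real N powr (2 + \<eta>)"] powr_split'[OF N, of \<eta>] by simp
  have q: "?a / real N ^ 2 \<le> ?p + 1 / real N ^ 2"
  proof -
    have "?a / real N ^ 2 \<le> (?p * real N ^ 2 + 1) / real N ^ 2"
      by (rule divide_right_mono[OF a_le]) simp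
    also have "\<dots> = ?p + 1 / real N ^ 2" using N2 by (simp add: field_simps)
    finally show ?thesis .
  qed
  have t1: "8 * ?a / real N ^ 2 \<le> 8 * (?p + 1 / real N ^ 2)" using q by simp
  have t2: "sqrt (2 * ?a) / real N \<le> sqrt (2 * ?p + 2 * (1 / real N ^ 2))"
  proof -
    have "sqrt (2 * ?a) / real N = sqrt (2 * ?a / real N ^ 2)"
      using N by (simp add: real_sqrt_divide)
    also have "\<dots> \<le> sqrt (2 * ?p + 2 * (1 / real N ^ 2))"
      using q by (intro real_sqrt_le_mono) simp
    finally show ?thesis .
  qed
  have t3: "2 * real N ^ 2 / ?m \<le> 2 * ?p"
  proof -
    have pe: "real N powr \<eta> > 0" using N by simp
    have "2 * real N ^ 2 / ?m \<le> 2 * real N ^ 2 / (real N powr \<eta> * real N ^ 2)"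
      using m_ge pe N2 by (intro divide_left_mono mult_pos_pos) auto
    also have "\<dots> = 2 / real N powr \<eta>" using N2 by simp
    also have "\<dots> = 2 * ?p" by (simp add: powr_minus divide_inverse)
    finally show ?thesis .
  qed
  show ?thesis using t1 t2 t3 by simp
qed

lemma g_lim: assumes "\<eta> > 0"
  shows "((\<lambda>N::nat. 4096 * (8 * (real N powr (- \<eta>) + 1 / real N ^ 2) + 32 * sqrt (2 * real N powr (- \<eta>) + 2 * (1 / real N ^ 2)))
           + 2 * real N powr (- \<eta>)) \<longlongrightarrow> 0) sequentially"
proof -
  have t1: "((\<lambda>N::nat. real N powr (- \<eta>)) \<longlongrightarrow> 0) sequentially"
    by (rule tendsto_neg_powr) (use assms filterlim_real_sequentially in auto)
  have "((\<lambda>N::nat. inverse (real N) * inverse (real N)) \<longlongrightarrow> 0 * 0) sequentially"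
    by (intro tendsto_mult lim_inverse_n)
  hence t2: "((\<lambda>N::nat. 1 / real N ^ 2) \<longlongrightarrow> 0) sequentially"
    by (simp add: power2_eq_square inverse_eq_divide)
  have "((\<lambda>N::nat. 4096 * (8 * (real N powr (- \<eta>) + 1 / real N ^ 2) + 32 * sqrt (2 * real N powr (- \<eta>) + 2 * (1 / real N ^ 2)))
           + 2 * real N powr (- \<eta>)) \<longlongrightarrow> 4096 * (8 * (0 + 0) + 32 * sqrt (2 * 0 + 2 * 0)) + 2 * 0) sequentially"
    by (intro tendsto_intros t1 t2)
  thus ?thesis by simp
qed

lemma exp_big: assumes "\<alpha> > 0"
  shows "eventually (\<lambda>N::nat. 9 * real N ^ 2 < exp (\<alpha> * real N)) sequentially"
proof -
  have lim: "((\<lambda>N::nat. (\<alpha> * real N) ^ 2 / exp (\<alpha> * real N)) \<longlongrightarrow> 0) sequentially"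
    by (rule filterlim_compose[OF tendsto_power_div_exp_0])
       (rule filterlim_tendsto_pos_mult_at_top[OF tendsto_const assms filterlim_real_sequentially])
  have "eventually (\<lambda>N::nat. (\<alpha> * real N) ^ 2 / exp (\<alpha> * real N) < \<alpha> ^ 2 / 9) sequentially"
    by (rule order_tendstoD(2)[OF lim]) (use assms in simp)
  thus ?thesis
  proof (rule eventually_mono)
    fix N :: nat assume h: "(\<alpha> * real N) ^ 2 / exp (\<alpha> * real N) < \<alpha> ^ 2 / 9"
    have "(\<alpha> * real N) ^ 2 < \<alpha> ^ 2 / 9 * exp (\<alpha> * real N)"
      using h by (simp add: divide_less_eq)
    hence "\<alpha> ^ 2 * (9 * real N ^ 2) < \<alpha> ^ 2 * exp (\<alpha> * real N)"
      by (simp add: power_mult_distrib algebra_simps)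
    thus "9 * real N ^ 2 < exp (\<alpha> * real N)"
      using assms by (simp add: mult_less_cancel_left)
  qed
qed



theorem theorem1p1:
  fixes \<alpha> \<eta> :: real
  assumes "\<alpha> > 0" and "\<eta> > 0"
  shows "(\<lambda>N::nat. measure_pmf.prob (T_law \<alpha> N)
            {T. real N powr (2 - \<eta>) < real (max_gcd N T) \<and>
                real (max_gcd N T) < real N powr (2 + \<eta>)})
         \<longlonglongrightarrow> 1"
proof -
  define a where "a = (\<lambda>N::nat. nat \<lceil>real N powr (2 - \<eta>)\<rceil>)"
  define m where "m = (\<lambda>N::nat. nat \<lceil>real N powr (2 + \<eta>)\<rceil>)"
  define e where "e = (\<lambda>N::nat. 4096 * (8 * real (a N) / real N ^ 2 + 32 * sqrt (2 * real (a N)) / real N)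
           + 2 * real N ^ 2 / real (m N))"
  define g where "g = (\<lambda>N::nat. 4096 * (8 * (real N powr (- \<eta>) + 1 / real N ^ 2) + 32 * sqrt (2 * real N powr (- \<eta>) + 2 * (1 / real N ^ 2)))
           + 2 * real N powr (- \<eta>))"
  define P where "P = (\<lambda>N::nat. measure_pmf.prob (T_law \<alpha> N)
            {T. real N powr (2 - \<eta>) < real (max_gcd N T) \<and>
                real (max_gcd N T) < real N powr (2 + \<eta>)})"
  have e_nonneg: "e N \<ge> 0" for N unfolding e_def by (intro add_nonneg_nonneg mult_nonneg_nonneg divide_nonneg_nonneg) auto
  have "eventually (\<lambda>N. e N \<le> g N) sequentially"
    using eventually_ge_at_top[of 1]
    by (rule eventually_mono) (unfold e_def g_def a_def m_def, rule e_bound[OF assms(2)])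
  moreover have "(g \<longlongrightarrow> 0) sequentially" unfolding g_def by (rule g_lim[OF assms(2)])
  ultimately have e0: "(e \<longlongrightarrow> 0) sequentially"
    by (intro tendsto_sandwich[of "\<lambda>_. 0" e sequentially g 0]) (auto simp: e_nonneg)
  have low: "eventually (\<lambda>N. 1 - e N \<le> P N) sequentially"
    using exp_big[OF assms(1)] eventually_ge_at_top[of 2]
  proof eventually_elim
    case (elim N)
    have N: "real N \<ge> 2" using elim by simp
    have Ng: "real N \<ge> 1" using N by simp
    have "real N powr (2 - \<eta>) \<le> real N powr 2"
      by (rule powr_mono) (use assms Ng in auto)
    also have "real N powr 2 = real N ^ 2" using N by simp
    finally have x: "real N powr (2 - \<eta>) \<le> real N ^ 2" .
    have "real (a N) < real N powr (2 - \<eta>) + 1" unfolding a_def by (rule ceil_bounds(2)) simp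
    hence a4: "real (4 * a N) < 4 * real N ^ 2 + 4" using x by simp
    have "real (nat \<lfloor>exp (\<alpha> * real N)\<rfloor>) > exp (\<alpha> * real N) - 1" by (rule floor_bound) simp
    moreover have "real N ^ 2 \<ge> 1" using Ng by simp
    ultimately have "real (4 * a N) < real (nat \<lfloor>exp (\<alpha> * real N)\<rfloor>)" using a4 elim(1) by linarith
    hence "4 * a N \<le> nat \<lfloor>exp (\<alpha> * real N)\<rfloor>" by (simp only: of_nat_less_iff less_imp_le)
    hence h4: "4 * nat \<lceil>real N powr (2 - \<eta>)\<rceil> \<le> nat \<lfloor>exp (\<alpha> * real N)\<rfloor>" unfolding a_def .
    have gb: "measure_pmf.prob (Om (nat \<lfloor>exp (\<alpha> * real N)\<rfloor>) N)
            {T. real N powr (2 - \<eta>) < real (max_gcd N T) \<and> real (max_gcd N T) < real N powr (2 + \<eta>)}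
       \<ge> 1 - 4096 * (8 * real (a N) / real N ^ 2 + 32 * sqrt (2 * real (a N)) / real N) - 2 * real N ^ 2 / real (m N)"
      unfolding a_def m_def by (rule good_bound[OF elim(2) refl refl h4])
    have "1 - e N \<le> measure_pmf.prob (Om (nat \<lfloor>exp (\<alpha> * real N)\<rfloor>) N)
            {T. real N powr (2 - \<eta>) < real (max_gcd N T) \<and> real (max_gcd N T) < real N powr (2 + \<eta>)}"
      unfolding e_def using gb by linarith
    thus ?case unfolding P_def T_law_Om .
  qed
  have up: "eventually (\<lambda>N. P N \<le> 1) sequentially" unfolding P_def by (intro always_eventually allI measure_pmf.prob_le_1)
  have "((\<lambda>N. 1 - e N) \<longlongrightarrow> 1 - 0) sequentially" by (intro tendsto_intros e0)
  hence "((\<lambda>N. 1 - e N) \<longlongrightarrow> 1) sequentially" by simp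
  hence "(P \<longlongrightarrow> 1) sequentially" by (rule tendsto_sandwich[OF low up _ tendsto_const])
  thus ?thesis unfolding P_def .
qed


end
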